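(* Let $(W,S)$ be a Coxeter system with $S$ finite such that all elements of $Q_W$ are conjugate in $W$ (i.e. $c(W)=1$). Identify $C_W$ with $\mathbb{Z}$ via $e_s^2\mapsto1$ ($s\in S$). Define $\tau_\rho:W\times W\to\mathbb{Z}$ by $\tau_\rho(w_1,w_2)=1$ if $\ell(w_1)$ and $\ell(w_2)$ are both odd, and $\tau_\rho(w_1,w_2)=0$ otherwise, where $\ell$ is the length function with respect to $S$. Then $\tau_\rho$ is a normalized $2$-cocycle and $[\tau_\rho]=u_\phi\in H^2(W,\mathbb{Z})$, where $u_\phi$ is the class of the central extension $0\to\mathbb{Z}\to\operatorname{Ad}(Q_W)\xrightarrow{\phi}W\to1$.
   Context: A Coxeter system $(W,S)$: $S$ finite, $m:S\times S\to\mathbb{N}\cup\{\infty\}$ with $m(s,s)=1$, $2\le m(s,t)=m(t,s)\le\infty$ for $s\ne t$, $W=\langle s\in S\mid (st)^{m(s,t)}=1\ (m(s,t)<\infty)\rangle$. The Coxeter quandle $Q_W=\bigcup_{w\in W}w^{-1}Sw$ has operation $x\ast y=yxy$; $\operatorname{Ad}(Q_W)=\langle e_x\ (x\in Q_W)\mid e_y^{-1}e_xe_y=e_{x\ast y}\rangle$; $\phi:\operatorname{Ad}(Q_W)\to W$ is $e_x\mapsto x$ and $C_W=\ker\phi$, a central subgroup. $c(W)$ is the number of $W$-conjugacy classes in $Q_W$. When $c(W)=1$, $C_W$ is infinite cyclic generated by $e_s^2$, and $e_s^2$ is the same element for all $s\in S$, so the identification is well defined. *)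

theory Defs
  imports "HOL-Algebra.Algebra" "HOL-Library.Extended_Nat"
begin

definition word_eval :: "('g, 'm) monoid_scheme \<Rightarrow> ('b \<Rightarrow> 'g) \<Rightarrow> 'b list \<Rightarrow> 'g" where
  "word_eval G evl w = foldr (\<lambda>b acc. evl b \<otimes>\<^bsub>G\<^esub> acc) w \<one>\<^bsub>G\<^esub>"

definition word_rel :: "'b list set \<Rightarrow> 'b list \<Rightarrow> 'b list \<Rightarrow> bool" where
  "word_rel R = equivclp (\<lambda>x y. \<exists>u v r. r \<in> R \<and> x = u @ r @ v \<and> y = u @ v)"

text \<open>G is presented by letters Gens (interpreted via evl) and relators R. The relators
  include the inverse-cancellation relators of each letter, so this monoid
  presentation is a group presentation.\<close>
definition presentation :: "('g, 'm) monoid_scheme \<Rightarrow> 'b set \<Rightarrow> ('b \<Rightarrow> 'g) \<Rightarrow> 'b list set \<Rightarrow> bool" where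
  "presentation G Gens evl R \<longleftrightarrow> group G \<and> evl ` Gens \<subseteq> carrier G
     \<and> (\<forall>r\<in>R. set r \<subseteq> Gens \<and> word_eval G evl r = \<one>\<^bsub>G\<^esub>)
     \<and> (\<forall>g\<in>carrier G. \<exists>w. set w \<subseteq> Gens \<and> word_eval G evl w = g)
     \<and> (\<forall>w. set w \<subseteq> Gens \<and> word_eval G evl w = \<one>\<^bsub>G\<^esub> \<longrightarrow> word_rel R w [])"

definition coxeter_relators :: "'a set \<Rightarrow> ('a \<Rightarrow> 'a \<Rightarrow> enat) \<Rightarrow> 'a list set" where
  "coxeter_relators S m = {concat (replicate k [s, t]) | s t k. s \<in> S \<and> t \<in> S \<and> m s t = enat k}"

text \<open>(W,S) is a Coxeter system with Coxeter matrix m (m s t = \<infinity> means no relation).\<close>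
definition coxeter_system :: "('a, 'm) monoid_scheme \<Rightarrow> 'a set \<Rightarrow> ('a \<Rightarrow> 'a \<Rightarrow> enat) \<Rightarrow> bool" where
  "coxeter_system W S m \<longleftrightarrow> S \<subseteq> carrier W
     \<and> (\<forall>s\<in>S. m s s = 1)
     \<and> (\<forall>s\<in>S. \<forall>t\<in>S. s \<noteq> t \<longrightarrow> m s t = m t s \<and> 2 \<le> m s t)
     \<and> presentation W S id (coxeter_relators S m)"

definition coxeter_length :: "('a, 'm) monoid_scheme \<Rightarrow> 'a set \<Rightarrow> 'a \<Rightarrow> nat" where
  "coxeter_length W S w = (LEAST n. \<exists>ws. length ws = n \<and> set ws \<subseteq> S \<and> word_eval W id ws = w)"

definition coxeter_quandle :: "('a, 'm) monoid_scheme \<Rightarrow> 'a set \<Rightarrow> 'a set" where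
  "coxeter_quandle W S = {inv\<^bsub>W\<^esub> w \<otimes>\<^bsub>W\<^esub> s \<otimes>\<^bsub>W\<^esub> w | w s. w \<in> carrier W \<and> s \<in> S}"

definition quandle_op :: "('a, 'm) monoid_scheme \<Rightarrow> 'a \<Rightarrow> 'a \<Rightarrow> 'a" where
  "quandle_op W x y = y \<otimes>\<^bsub>W\<^esub> x \<otimes>\<^bsub>W\<^esub> y"

definition coxeter_c :: "('a, 'm) monoid_scheme \<Rightarrow> 'a set \<Rightarrow> nat" where
  "coxeter_c W S = card ((\<lambda>x. {inv\<^bsub>W\<^esub> w \<otimes>\<^bsub>W\<^esub> x \<otimes>\<^bsub>W\<^esub> w | w. w \<in> carrier W}) ` coxeter_quandle W S)"

text \<open>Letter (x, True) stands for e_x, (x, False) for e_x inverse.\<close>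
definition ad_letter :: "('b, 'n) monoid_scheme \<Rightarrow> ('a \<Rightarrow> 'b) \<Rightarrow> 'a \<times> bool \<Rightarrow> 'b" where
  "ad_letter A e l = (if snd l then e (fst l) else inv\<^bsub>A\<^esub> (e (fst l)))"

definition ad_relators :: "('a, 'm) monoid_scheme \<Rightarrow> 'a set \<Rightarrow> ('a \<times> bool) list set" where
  "ad_relators W Q = {[(x, b), (x, \<not> b)] | x b. x \<in> Q}
     \<union> {[(y, False), (x, True), (y, True), (quandle_op W x y, False)] | x y. x \<in> Q \<and> y \<in> Q}"

text \<open>A together with e : Q_W \<rightarrow> A is the adjoint group Ad(Q_W) =
  < e_x (x in Q_W) | e_y^-1 e_x e_y = e_(x*y) >.\<close>
definition adjoint_group :: "('a, 'm) monoid_scheme \<Rightarrow> 'a set \<Rightarrow> ('b, 'n) monoid_scheme \<Rightarrow> ('a \<Rightarrow> 'b) \<Rightarrow> bool" where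
  "adjoint_group W S A e \<longleftrightarrow>
     presentation A (coxeter_quandle W S \<times> UNIV) (ad_letter A e) (ad_relators W (coxeter_quandle W S))"

definition normalized_2cocycle :: "('a, 'm) monoid_scheme \<Rightarrow> ('a \<Rightarrow> 'a \<Rightarrow> int) \<Rightarrow> bool" where
  "normalized_2cocycle W f \<longleftrightarrow>
     (\<forall>a\<in>carrier W. \<forall>b\<in>carrier W. \<forall>c\<in>carrier W.
        f b c - f (a \<otimes>\<^bsub>W\<^esub> b) c + f a (b \<otimes>\<^bsub>W\<^esub> c) - f a b = 0)
     \<and> (\<forall>a\<in>carrier W. f \<one>\<^bsub>W\<^esub> a = 0 \<and> f a \<one>\<^bsub>W\<^esub> = 0)"

text \<open>Equality of classes in H^2(W,Z): difference is a coboundary.\<close>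
definition cohomologous :: "('a, 'm) monoid_scheme \<Rightarrow> ('a \<Rightarrow> 'a \<Rightarrow> int) \<Rightarrow> ('a \<Rightarrow> 'a \<Rightarrow> int) \<Rightarrow> bool" where
  "cohomologous W f g \<longleftrightarrow> (\<exists>c :: 'a \<Rightarrow> int. \<forall>a\<in>carrier W. \<forall>b\<in>carrier W.
      f a b - g a b = c a + c b - c (a \<otimes>\<^bsub>W\<^esub> b))"

text \<open>Cocycle of the central extension w.r.t. a set-theoretic section sigma, where the
  kernel is identified with Z via n \<mapsto> z^n:
  sigma(a) sigma(b) = z^{f(a,b)} sigma(ab).\<close>
definition extension_cocycle :: "('a, 'm) monoid_scheme \<Rightarrow> ('b, 'n) monoid_scheme \<Rightarrow> 'b \<Rightarrow> ('a \<Rightarrow> 'b) \<Rightarrow> 'a \<Rightarrow> 'a \<Rightarrow> int" where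
  "extension_cocycle W A z \<sigma> a b =
     (THE n :: int. \<sigma> a \<otimes>\<^bsub>A\<^esub> \<sigma> b = (z [^]\<^bsub>A\<^esub> n) \<otimes>\<^bsub>A\<^esub> \<sigma> (a \<otimes>\<^bsub>W\<^esub> b))"

definition tau_rho :: "('a, 'm) monoid_scheme \<Rightarrow> 'a set \<Rightarrow> 'a \<Rightarrow> 'a \<Rightarrow> int" where
  "tau_rho W S w1 w2 = (if odd (coxeter_length W S w1) \<and> odd (coxeter_length W S w2) then 1 else 0)"

end

theory Submission
  imports Defs
begin

lemma word_eval_Nil[simp]: "word_eval G f [] = \<one>\<^bsub>G\<^esub>"
  by (simp add: word_eval_def)
lemma word_eval_id_Cons: "word_eval G id (x # w) = x \<otimes>\<^bsub>G\<^esub> word_eval G id w"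
  by (simp add: word_eval_def)
lemma word_eval_Cons[simp]: "word_eval G f (x # w) = f x \<otimes>\<^bsub>G\<^esub> word_eval G f w"
  by (simp add: word_eval_def)

lemma word_eval_closed:
  assumes "monoid G" "f ` set w \<subseteq> carrier G"
  shows "word_eval G f w \<in> carrier G"
  using assms(2) by (induction w) (auto simp: monoid.m_closed[OF assms(1)] monoid.one_closed[OF assms(1)])

lemma word_eval_append:
  assumes "monoid G" "f ` set u \<subseteq> carrier G" "f ` set v \<subseteq> carrier G"
  shows "word_eval G f (u @ v) = word_eval G f u \<otimes>\<^bsub>G\<^esub> word_eval G f v"
  using assms(2)
proof (induction u)
  case Nil then show ?case using word_eval_closed[OF assms(1) assms(3)] monoid.l_one[OF assms(1)] by simp
next
  case (Cons a u)
  then show ?case using word_eval_closed[OF assms(1) assms(3)] word_eval_closed[OF assms(1), of f u]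
    by (simp add: monoid.m_assoc[OF assms(1)])
qed

lemma equivclp_invariant:
  assumes "\<And>x y. r x y \<Longrightarrow> f x = f y" "equivclp r x y"
  shows "f x = f y"
  using assms(2) unfolding equivclp_def
proof (induction rule: rtranclp_induct)
  case base then show ?case by simp
next
  case (step y z) then show ?case using assms(1) by (auto simp: symclp_def)
qed

locale cxa =
  fixes W :: "('a, 'm) monoid_scheme" and S :: "'a set" and m :: "'a \<Rightarrow> 'a \<Rightarrow> enat"
    and A :: "('b, 'n) monoid_scheme" and e :: "'a \<Rightarrow> 'b" and \<phi> :: "'b \<Rightarrow> 'a" and s0 :: 'a
  assumes cox: "coxeter_system W S m"
    and c1: "coxeter_c W S = 1"
    and adj: "adjoint_group W S A e"
    and phihom: "\<phi> \<in> hom A W"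
    and phie: "\<forall>x\<in>coxeter_quandle W S. \<phi> (e x) = x"
    and s0S: "s0 \<in> S"

lemma (in cxa) grpW: "group W" using cox by (simp add: coxeter_system_def presentation_def)
lemma (in cxa) grpA: "group A" using adj by (simp add: adjoint_group_def presentation_def)

sublocale cxa \<subseteq> W: group W by (rule grpW)
sublocale cxa \<subseteq> A: group A by (rule grpA)
sublocale cxa \<subseteq> H: group_hom A W \<phi>
  by (simp add: group_hom_def group_hom_axioms_def grpA grpW phihom)

context cxa
begin

abbreviation "Q \<equiv> coxeter_quandle W S"
abbreviation "R \<equiv> coxeter_relators S m"
abbreviation "z \<equiv> e s0 \<otimes>\<^bsub>A\<^esub> e s0"
abbreviation "evW u \<equiv> word_eval W id u"
abbreviation "lift u \<equiv> word_eval A e u"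

lemma SW: "S \<subseteq> carrier W" using cox by (simp add: coxeter_system_def)

lemma genW: "w \<in> carrier W \<Longrightarrow> \<exists>u. set u \<subseteq> S \<and> evW u = w"
  using cox by (simp add: coxeter_system_def presentation_def)

lemma relW: "set u \<subseteq> S \<Longrightarrow> evW u = \<one>\<^bsub>W\<^esub> \<Longrightarrow> word_rel R u []"
  using cox by (simp add: coxeter_system_def presentation_def)

lemma relatorsW: "r \<in> R \<Longrightarrow> set r \<subseteq> S \<and> evW r = \<one>\<^bsub>W\<^esub>"
  using cox by (simp add: coxeter_system_def presentation_def)

lemma evW_closed: "set u \<subseteq> S \<Longrightarrow> evW u \<in> carrier W"
  using SW by (intro word_eval_closed) auto

lemma evW_append: "set u \<subseteq> S \<Longrightarrow> set v \<subseteq> S \<Longrightarrow> evW (u @ v) = evW u \<otimes>\<^bsub>W\<^esub> evW v"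
  using SW by (intro word_eval_append) auto

lemma ss: assumes "s \<in> S" shows "s \<otimes>\<^bsub>W\<^esub> s = \<one>\<^bsub>W\<^esub>"
proof -
  have "m s s = enat 1" using cox assms by (simp add: coxeter_system_def one_enat_def)
  then have "[s, s] \<in> R" unfolding coxeter_relators_def using assms
    by (auto intro!: exI[of _ s] exI[of _ 1])
  then have "evW [s, s] = \<one>\<^bsub>W\<^esub>" using relatorsW by blast
  then show ?thesis using assms SW by auto
qed

lemma inv_s: "s \<in> S \<Longrightarrow> inv\<^bsub>W\<^esub> s = s"
  using ss SW by (metis W.inv_equality subsetD)

lemma evW_rev: "set u \<subseteq> S \<Longrightarrow> evW (rev u) = inv\<^bsub>W\<^esub> (evW u)"
proof (induction u)
  case Nil then show ?case by simp
next
  case (Cons a u)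
  then have "evW (rev (a # u)) = evW (rev u) \<otimes>\<^bsub>W\<^esub> evW [a]"
    by (simp add: evW_append)
  also have "\<dots> = inv\<^bsub>W\<^esub> (evW u) \<otimes>\<^bsub>W\<^esub> a"
  proof -
    have 1: "evW (rev u) = inv\<^bsub>W\<^esub> (evW u)" using Cons.prems by (intro Cons.IH) auto
    have 2: "evW [a] = a" using Cons SW by auto
    show ?thesis by (simp only: 1 2)
  qed
  also have "\<dots> = inv\<^bsub>W\<^esub> (a \<otimes>\<^bsub>W\<^esub> evW u)" using Cons SW inv_s evW_closed
    by (simp add: W.inv_mult_group subsetD)
  finally show ?case by (simp only: rev.simps word_eval_id_Cons)
qed

lemma relator_even: "r \<in> R \<Longrightarrow> even (length r)"
  unfolding coxeter_relators_def by (auto simp: length_concat sum_list_replicate)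

lemma word_rel_even: assumes "word_rel R u v" shows "even (length u) = even (length v)"
proof -
  have "(\<lambda>w. even (length w)) u = (\<lambda>w. even (length w)) v"
    using assms unfolding word_rel_def
    by (rule equivclp_invariant[rotated]) (auto dest: relator_even)
  then show ?thesis by simp
qed

lemma parity_welldef:
  assumes "set u \<subseteq> S" "set v \<subseteq> S" "evW u = evW v"
  shows "even (length u) = even (length v)"
proof -
  have "evW (u @ rev v) = \<one>\<^bsub>W\<^esub>"
    using assms by (simp add: evW_append evW_rev evW_closed)
  then have "word_rel R (u @ rev v) []" using relW assms by auto
  then show ?thesis using word_rel_even by fastforce
qed

lemma length_word: assumes "w \<in> carrier W"
  shows "\<exists>u. set u \<subseteq> S \<and> evW u = w \<and> length u = coxeter_length W S w"
proof -
  obtain u where "set u \<subseteq> S" "evW u = w" using genW assms by blast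
  let ?P = "\<lambda>n. \<exists>ws. length ws = n \<and> set ws \<subseteq> S \<and> evW ws = w"
  have "?P (LEAST n. ?P n)" by (rule LeastI_ex) (use \<open>set u \<subseteq> S\<close> \<open>evW u = w\<close> in blast)
  then show ?thesis unfolding coxeter_length_def by blast
qed

lemma length_parity: "set u \<subseteq> S \<Longrightarrow> even (coxeter_length W S (evW u)) = even (length u)"
  using length_word[OF evW_closed] parity_welldef by metis

lemma length_one: "coxeter_length W S \<one>\<^bsub>W\<^esub> = 0"
  unfolding coxeter_length_def by (rule Least_eq_0) (auto intro: exI[of _ "[]"])

lemma length_mult: assumes "a \<in> carrier W" "b \<in> carrier W"
  shows "even (coxeter_length W S (a \<otimes>\<^bsub>W\<^esub> b)) = (even (coxeter_length W S a) = even (coxeter_length W S b))"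
proof -
  obtain u v where "set u \<subseteq> S" "evW u = a" "set v \<subseteq> S" "evW v = b"
    using genW assms by metis
  then show ?thesis using length_parity[of u] length_parity[of v] length_parity[of "u @ v"]
    by (auto simp: evW_append)
qed

end

lemma (in group) cancel_l1: "a \<in> carrier G \<Longrightarrow> b \<in> carrier G \<Longrightarrow> a \<otimes> (inv a \<otimes> b) = b"
  by (simp add: m_assoc[symmetric])
lemma (in group) cancel_l2: "a \<in> carrier G \<Longrightarrow> b \<in> carrier G \<Longrightarrow> inv a \<otimes> (a \<otimes> b) = b"
  by (simp add: m_assoc[symmetric])

lemma (in group) comm_inv:
  assumes "a \<in> carrier G" "g \<in> carrier G" "a \<otimes> g = g \<otimes> a"
  shows "inv a \<otimes> g = g \<otimes> inv a"
proof -
  have "inv a \<otimes> g = inv a \<otimes> (g \<otimes> a) \<otimes> inv a" using assms by (simp add: m_assoc)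
  also have "\<dots> = inv a \<otimes> (a \<otimes> g) \<otimes> inv a" using assms(3) by simp
  also have "\<dots> = g \<otimes> inv a" using assms(1,2) by (simp add: m_assoc cancel_l2)
  finally show ?thesis .
qed

lemma (in group) comm_int_pow:
  assumes "a \<in> carrier G" "g \<in> carrier G" "a \<otimes> g = g \<otimes> a"
  shows "a [^] (n::int) \<otimes> g = g \<otimes> a [^] n"
proof -
  have c: "a [^] (k::nat) \<otimes> g = g \<otimes> a [^] k" for k
    using group_commutes_pow[OF assms(3) assms(1) assms(2)] .
  have ci: "inv (a [^] (k::nat)) \<otimes> g = g \<otimes> inv (a [^] k)" for k
    by (rule comm_inv[OF nat_pow_closed[OF assms(1)] assms(2) c])
  show ?thesis
  proof (cases "n < 0")
    case True
    then have "a [^] n = inv (a [^] (nat (-n)))" by (subst int_pow_def2) simp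
    then show ?thesis using ci by simp
  next
    case False
    then have "a [^] n = a [^] (nat n)" by (subst int_pow_def2) simp
    then show ?thesis using c by simp
  qed
qed

context cxa
begin

lemma Q_iff: "x \<in> Q \<longleftrightarrow> (\<exists>w s. x = inv\<^bsub>W\<^esub> w \<otimes>\<^bsub>W\<^esub> s \<otimes>\<^bsub>W\<^esub> w \<and> w \<in> carrier W \<and> s \<in> S)"
  unfolding coxeter_quandle_def by blast

lemma QW: "x \<in> Q \<Longrightarrow> x \<in> carrier W"
  using SW by (auto simp: Q_iff)

lemma SQ: "S \<subseteq> Q"
proof
  fix s assume "s \<in> S"
  then have "s = inv\<^bsub>W\<^esub> \<one>\<^bsub>W\<^esub> \<otimes>\<^bsub>W\<^esub> s \<otimes>\<^bsub>W\<^esub> \<one>\<^bsub>W\<^esub>" using SW by auto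
  then show "s \<in> Q" using \<open>s \<in> S\<close> unfolding Q_iff by blast
qed

lemma Qconj: assumes "x \<in> Q" "w \<in> carrier W" shows "inv\<^bsub>W\<^esub> w \<otimes>\<^bsub>W\<^esub> x \<otimes>\<^bsub>W\<^esub> w \<in> Q"
proof -
  obtain v s where v: "x = inv\<^bsub>W\<^esub> v \<otimes>\<^bsub>W\<^esub> s \<otimes>\<^bsub>W\<^esub> v" "v \<in> carrier W" "s \<in> S"
    using assms Q_iff by blast
  have sW: "s \<in> carrier W" using v SW by auto
  have "inv\<^bsub>W\<^esub> w \<otimes>\<^bsub>W\<^esub> x \<otimes>\<^bsub>W\<^esub> w = inv\<^bsub>W\<^esub> (v \<otimes>\<^bsub>W\<^esub> w) \<otimes>\<^bsub>W\<^esub> s \<otimes>\<^bsub>W\<^esub> (v \<otimes>\<^bsub>W\<^esub> w)"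
    using v sW assms by (simp add: W.inv_mult_group W.m_assoc)
  then show ?thesis unfolding Q_iff using v assms by blast
qed

lemma Qsq: assumes "x \<in> Q" shows "x \<otimes>\<^bsub>W\<^esub> x = \<one>\<^bsub>W\<^esub>"
proof -
  obtain v s where v: "x = inv\<^bsub>W\<^esub> v \<otimes>\<^bsub>W\<^esub> s \<otimes>\<^bsub>W\<^esub> v" "v \<in> carrier W" "s \<in> S"
    using assms Q_iff by blast
  have sW: "s \<in> carrier W" using v SW by auto
  have "x \<otimes>\<^bsub>W\<^esub> x = inv\<^bsub>W\<^esub> v \<otimes>\<^bsub>W\<^esub> (s \<otimes>\<^bsub>W\<^esub> s) \<otimes>\<^bsub>W\<^esub> v"
    using v sW by (simp add: W.m_assoc W.cancel_l1)
  also have "\<dots> = \<one>\<^bsub>W\<^esub>" using ss[OF v(3)] v by simp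
  finally show ?thesis .
qed

lemma Qinv: "x \<in> Q \<Longrightarrow> inv\<^bsub>W\<^esub> x = x"
  using Qsq QW by (intro W.inv_equality) auto

lemma Qop: assumes "x \<in> Q" "y \<in> Q" shows "y \<otimes>\<^bsub>W\<^esub> x \<otimes>\<^bsub>W\<^esub> y \<in> Q"
proof -
  have "inv\<^bsub>W\<^esub> y \<otimes>\<^bsub>W\<^esub> x \<otimes>\<^bsub>W\<^esub> y \<in> Q" using Qconj assms QW by blast
  then show ?thesis using Qinv[OF assms(2)] by simp
qed

lemma evQ_closed: "set u \<subseteq> Q \<Longrightarrow> evW u \<in> carrier W"
  using QW by (intro word_eval_closed) auto

lemma evQ_append: "set u \<subseteq> Q \<Longrightarrow> set v \<subseteq> Q \<Longrightarrow> evW (u @ v) = evW u \<otimes>\<^bsub>W\<^esub> evW v"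
  using QW by (intro word_eval_append) auto

abbreviation "L \<equiv> Q \<times> (UNIV :: bool set)"
abbreviation "evA ws \<equiv> word_eval A (ad_letter A e) ws"

lemma letters_closed: "ad_letter A e ` L \<subseteq> carrier A"
  using adj by (simp add: adjoint_group_def presentation_def)

lemma eA: assumes "x \<in> Q" shows "e x \<in> carrier A"
proof -
  have "ad_letter A e (x, True) \<in> carrier A" using letters_closed assms by blast
  then show ?thesis by (simp add: ad_letter_def)
qed

lemma letter_closed: "l \<in> L \<Longrightarrow> ad_letter A e l \<in> carrier A"
  using letters_closed by auto

lemma genA: "g \<in> carrier A \<Longrightarrow> \<exists>ws. set ws \<subseteq> L \<and> evA ws = g"
  using adj by (simp add: adjoint_group_def presentation_def)

lemma relA: "set ws \<subseteq> L \<Longrightarrow> evA ws = \<one>\<^bsub>A\<^esub> \<Longrightarrow> word_rel (ad_relators W Q) ws []"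
  using adj by (simp add: adjoint_group_def presentation_def)

lemma relatorsA: "r \<in> ad_relators W Q \<Longrightarrow> evA r = \<one>\<^bsub>A\<^esub>"
  using adj by (simp add: adjoint_group_def presentation_def)

lemma conj_rel: assumes "x \<in> Q" "y \<in> Q"
  shows "inv\<^bsub>A\<^esub> (e y) \<otimes>\<^bsub>A\<^esub> e x \<otimes>\<^bsub>A\<^esub> e y = e (y \<otimes>\<^bsub>W\<^esub> x \<otimes>\<^bsub>W\<^esub> y)"
proof -
  let ?q = "y \<otimes>\<^bsub>W\<^esub> x \<otimes>\<^bsub>W\<^esub> y"
  have mem: "[(y, False), (x, True), (y, True), (quandle_op W x y, False)] \<in> ad_relators W Q"
    unfolding ad_relators_def
    apply (rule UnI2)
    apply (rule CollectI)
    apply (rule exI[of _ x], rule exI[of _ y])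
    using assms by simp
  have 1: "evA [(y, False), (x, True), (y, True), (?q, False)] = \<one>\<^bsub>A\<^esub>"
    using relatorsA[OF mem] by (simp add: quandle_op_def)
  have q: "?q \<in> Q" using Qop assms by blast
  have "inv\<^bsub>A\<^esub> (e y) \<otimes>\<^bsub>A\<^esub> e x \<otimes>\<^bsub>A\<^esub> e y \<otimes>\<^bsub>A\<^esub> inv\<^bsub>A\<^esub> (e ?q) = \<one>\<^bsub>A\<^esub>"
    using 1 eA assms q by (simp add: ad_letter_def A.m_assoc)
  moreover have "inv\<^bsub>A\<^esub> (e y) \<otimes>\<^bsub>A\<^esub> e x \<otimes>\<^bsub>A\<^esub> e y \<in> carrier A" using eA assms by simp
  ultimately have "inv\<^bsub>A\<^esub> (e y) \<otimes>\<^bsub>A\<^esub> e x \<otimes>\<^bsub>A\<^esub> e y = \<one>\<^bsub>A\<^esub> \<otimes>\<^bsub>A\<^esub> e ?q"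
    using A.inv_solve_right'[of "\<one>\<^bsub>A\<^esub>" "inv\<^bsub>A\<^esub> (e y) \<otimes>\<^bsub>A\<^esub> e x \<otimes>\<^bsub>A\<^esub> e y" "e ?q"] eA[OF q]
    by blast
  then show ?thesis using eA[OF q] by simp
qed

lemma liftQ_closed: "set u \<subseteq> Q \<Longrightarrow> lift u \<in> carrier A"
  using eA by (intro word_eval_closed) auto

lemma liftQ_append: "set u \<subseteq> Q \<Longrightarrow> set v \<subseteq> Q \<Longrightarrow> lift (u @ v) = lift u \<otimes>\<^bsub>A\<^esub> lift v"
  using eA by (intro word_eval_append) auto

lemma phi_lift: "set u \<subseteq> Q \<Longrightarrow> \<phi> (lift u) = evW u"
proof (induction u)
  case Nil then show ?case by simp
next
  case (Cons a u)
  then have "\<phi> (lift (a # u)) = \<phi> (e a) \<otimes>\<^bsub>W\<^esub> \<phi> (lift u)"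
    using eA liftQ_closed by simp
  also have "\<dots> = a \<otimes>\<^bsub>W\<^esub> evW u"
  proof -
    have IH: "\<phi> (lift u) = evW u" using Cons.prems by (intro Cons.IH) auto
    have "\<phi> (e a) = a" using phie Cons.prems by auto
    then show ?thesis by (simp only: IH)
  qed
  finally show ?case by (simp only: word_eval_id_Cons)
qed

lemma conj_lift: assumes "set u \<subseteq> Q" "x \<in> Q"
  shows "inv\<^bsub>A\<^esub> (lift u) \<otimes>\<^bsub>A\<^esub> e x \<otimes>\<^bsub>A\<^esub> lift u = e (inv\<^bsub>W\<^esub> (evW u) \<otimes>\<^bsub>W\<^esub> x \<otimes>\<^bsub>W\<^esub> evW u)"
  using assms
proof (induction u arbitrary: x)
  case Nil then show ?case using eA QW by simp
next
  case (Cons y u)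
  have y: "y \<in> Q" and u: "set u \<subseteq> Q" using Cons.prems by auto
  have yxy: "y \<otimes>\<^bsub>W\<^esub> x \<otimes>\<^bsub>W\<^esub> y \<in> Q" using Qop y Cons.prems by blast
  have "inv\<^bsub>A\<^esub> (lift (y # u)) \<otimes>\<^bsub>A\<^esub> e x \<otimes>\<^bsub>A\<^esub> lift (y # u)
      = inv\<^bsub>A\<^esub> (lift u) \<otimes>\<^bsub>A\<^esub> (inv\<^bsub>A\<^esub> (e y) \<otimes>\<^bsub>A\<^esub> e x \<otimes>\<^bsub>A\<^esub> e y) \<otimes>\<^bsub>A\<^esub> lift u"
    using eA y u Cons.prems liftQ_closed by (simp add: A.inv_mult_group A.m_assoc)
  also have "\<dots> = inv\<^bsub>A\<^esub> (lift u) \<otimes>\<^bsub>A\<^esub> e (y \<otimes>\<^bsub>W\<^esub> x \<otimes>\<^bsub>W\<^esub> y) \<otimes>\<^bsub>A\<^esub> lift u"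
    using conj_rel y Cons.prems by simp
  also have "\<dots> = e (inv\<^bsub>W\<^esub> (evW u) \<otimes>\<^bsub>W\<^esub> (y \<otimes>\<^bsub>W\<^esub> x \<otimes>\<^bsub>W\<^esub> y) \<otimes>\<^bsub>W\<^esub> evW u)"
    using Cons.IH[OF u yxy] .
  also have "\<dots> = e (inv\<^bsub>W\<^esub> (evW (y # u)) \<otimes>\<^bsub>W\<^esub> x \<otimes>\<^bsub>W\<^esub> evW (y # u))"
  proof -
    have "inv\<^bsub>W\<^esub> (evW u) \<otimes>\<^bsub>W\<^esub> (y \<otimes>\<^bsub>W\<^esub> x \<otimes>\<^bsub>W\<^esub> y) \<otimes>\<^bsub>W\<^esub> evW u
        = inv\<^bsub>W\<^esub> (y \<otimes>\<^bsub>W\<^esub> evW u) \<otimes>\<^bsub>W\<^esub> x \<otimes>\<^bsub>W\<^esub> (y \<otimes>\<^bsub>W\<^esub> evW u)"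
      using QW y Cons.prems evQ_closed[OF u] Qinv[OF y]
      by (simp add: W.inv_mult_group W.m_assoc)
    then show ?thesis by (simp only: word_eval_id_Cons)
  qed
  finally show ?case .
qed

lemma zA: "z \<in> carrier A" using eA SQ s0S by auto

lemma lift_s0s0: "lift [s0, s0] = z"
proof -
  have "e s0 \<in> carrier A" using eA SQ s0S by auto
  then show ?thesis by simp
qed

lemma phi_z: "\<phi> z = \<one>\<^bsub>W\<^esub>" using phie SQ s0S eA ss by auto

lemma z_comm_e: assumes "x \<in> Q" shows "z \<otimes>\<^bsub>A\<^esub> e x = e x \<otimes>\<^bsub>A\<^esub> z"
proof -
  have u: "set [s0, s0] \<subseteq> Q" using SQ s0S by auto
  have ev: "evW [s0, s0] = \<one>\<^bsub>W\<^esub>" using ss s0S SW by auto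
  have "inv\<^bsub>A\<^esub> z \<otimes>\<^bsub>A\<^esub> e x \<otimes>\<^bsub>A\<^esub> z = e x"
    using conj_lift[OF u assms] unfolding lift_s0s0 ev using QW assms by simp
  then have "z \<otimes>\<^bsub>A\<^esub> e x = z \<otimes>\<^bsub>A\<^esub> (inv\<^bsub>A\<^esub> z \<otimes>\<^bsub>A\<^esub> e x \<otimes>\<^bsub>A\<^esub> z)" by simp
  also have "\<dots> = e x \<otimes>\<^bsub>A\<^esub> z" using zA eA[OF assms] by (simp add: A.m_assoc A.cancel_l1)
  finally show ?thesis .
qed

lemma z_central: assumes "g \<in> carrier A" shows "z \<otimes>\<^bsub>A\<^esub> g = g \<otimes>\<^bsub>A\<^esub> z"
proof -
  obtain ws where ws: "set ws \<subseteq> L" "evA ws = g" using genA assms by blast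
  have "z \<otimes>\<^bsub>A\<^esub> evA ws = evA ws \<otimes>\<^bsub>A\<^esub> z" using ws(1)
  proof (induction ws)
    case Nil then show ?case using zA by simp
  next
    case (Cons l ws)
    obtain x b where l: "l = (x, b)" by fastforce
    have x: "x \<in> Q" using Cons.prems l by auto
    have lc: "z \<otimes>\<^bsub>A\<^esub> ad_letter A e l = ad_letter A e l \<otimes>\<^bsub>A\<^esub> z"
    proof (cases b)
      case True
      then show ?thesis using z_comm_e[OF x] l by (simp add: ad_letter_def)
    next
      case False
      have "e x \<otimes>\<^bsub>A\<^esub> z = z \<otimes>\<^bsub>A\<^esub> e x" using z_comm_e[OF x] by simp
      then have "inv\<^bsub>A\<^esub> (e x) \<otimes>\<^bsub>A\<^esub> z = z \<otimes>\<^bsub>A\<^esub> inv\<^bsub>A\<^esub> (e x)"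
        using A.comm_inv[OF eA[OF x] zA] by blast
      then show ?thesis using False l by (simp add: ad_letter_def)
    qed
    have cl: "ad_letter A e l \<in> carrier A" "evA ws \<in> carrier A"
      using letter_closed Cons.prems letters_closed by (auto intro!: word_eval_closed)
    have IH: "z \<otimes>\<^bsub>A\<^esub> evA ws = evA ws \<otimes>\<^bsub>A\<^esub> z" using Cons by auto
    have "z \<otimes>\<^bsub>A\<^esub> evA (l # ws) = (z \<otimes>\<^bsub>A\<^esub> ad_letter A e l) \<otimes>\<^bsub>A\<^esub> evA ws"
      using cl zA by (simp add: A.m_assoc)
    also have "\<dots> = ad_letter A e l \<otimes>\<^bsub>A\<^esub> (z \<otimes>\<^bsub>A\<^esub> evA ws)"
      using cl zA lc by (simp add: A.m_assoc)
    also have "\<dots> = ad_letter A e l \<otimes>\<^bsub>A\<^esub> (evA ws \<otimes>\<^bsub>A\<^esub> z)" using IH by simp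
    also have "\<dots> = evA (l # ws) \<otimes>\<^bsub>A\<^esub> z" using cl zA by (simp add: A.m_assoc)
    finally show ?case .
  qed
  then show ?thesis using ws by simp
qed

lemma zpow_central: "g \<in> carrier A \<Longrightarrow> z [^]\<^bsub>A\<^esub> (n::int) \<otimes>\<^bsub>A\<^esub> g = g \<otimes>\<^bsub>A\<^esub> z [^]\<^bsub>A\<^esub> n"
  using A.comm_int_pow zA z_central by blast

end

fun alt :: "'a \<Rightarrow> 'a \<Rightarrow> nat \<Rightarrow> 'a list" where
  "alt x y 0 = []"
| "alt x y (Suc n) = x # alt y x n"

lemma alt_snoc: "alt x y (Suc n) = alt x y n @ [if even n then x else y]"
  by (induction n arbitrary: x y) auto

lemma alt_set: "set (alt x y n) \<subseteq> {x, y}"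
  by (induction n arbitrary: x y) auto

lemma rep_alt: "concat (replicate k [s, t]) = alt s t (2 * k)"
  by (induction k) auto

context cxa
begin

abbreviation "zp (n::int) \<equiv> z [^]\<^bsub>A\<^esub> n"

lemma zp_closed: "zp n \<in> carrier A" using zA by simp

lemma zp_add: "zp (a + b) = zp a \<otimes>\<^bsub>A\<^esub> zp b" using A.int_pow_mult zA by blast

lemma zp_0: "zp 0 = \<one>\<^bsub>A\<^esub>" by simp
lemma zp_1: "zp 1 = z" using zA by simp

lemma esq: assumes "x \<in> Q" shows "e x \<otimes>\<^bsub>A\<^esub> e x = z"
proof -
  let ?Cl = "\<lambda>x. {inv\<^bsub>W\<^esub> w \<otimes>\<^bsub>W\<^esub> x \<otimes>\<^bsub>W\<^esub> w | w. w \<in> carrier W}"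
  have "card (?Cl ` Q) = 1" using c1 by (simp add: coxeter_c_def)
  then obtain C where C: "?Cl ` Q = {C}" by (rule card_1_singletonE)
  have s0Q: "s0 \<in> Q" using subsetD[OF SQ s0S] .
  have "?Cl x \<in> ?Cl ` Q" using assms by (rule imageI)
  then have "?Cl x = C" unfolding C by simp
  have "?Cl s0 \<in> ?Cl ` Q" using s0Q by (rule imageI)
  then have "?Cl s0 = C" unfolding C by simp
  note \<open>?Cl x = C\<close> this
  moreover have "s0 \<in> ?Cl s0"
  proof -
    have "s0 = inv\<^bsub>W\<^esub> \<one>\<^bsub>W\<^esub> \<otimes>\<^bsub>W\<^esub> s0 \<otimes>\<^bsub>W\<^esub> \<one>\<^bsub>W\<^esub>" using QW s0Q by simp
    then show ?thesis by blast
  qed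
  ultimately have "s0 \<in> ?Cl x" by simp
  then obtain w where w: "w \<in> carrier W" "s0 = inv\<^bsub>W\<^esub> w \<otimes>\<^bsub>W\<^esub> x \<otimes>\<^bsub>W\<^esub> w" by blast
  have xW: "x \<in> carrier W" "s0 \<in> carrier W" using QW assms s0Q by auto
  have "inv\<^bsub>W\<^esub> (inv\<^bsub>W\<^esub> w) \<otimes>\<^bsub>W\<^esub> s0 \<otimes>\<^bsub>W\<^esub> inv\<^bsub>W\<^esub> w
      = w \<otimes>\<^bsub>W\<^esub> (inv\<^bsub>W\<^esub> w \<otimes>\<^bsub>W\<^esub> x \<otimes>\<^bsub>W\<^esub> w) \<otimes>\<^bsub>W\<^esub> inv\<^bsub>W\<^esub> w"
    using w by simp
  also have "\<dots> = x" using w xW by (simp add: W.m_assoc W.cancel_l1)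
  finally have xeq: "inv\<^bsub>W\<^esub> (inv\<^bsub>W\<^esub> w) \<otimes>\<^bsub>W\<^esub> s0 \<otimes>\<^bsub>W\<^esub> inv\<^bsub>W\<^esub> w = x" .
  obtain u where u: "set u \<subseteq> S" "evW u = inv\<^bsub>W\<^esub> w" using genW w by blast
  have uQ: "set u \<subseteq> Q" using u SQ by auto
  let ?L = "lift u"
  have Lc: "?L \<in> carrier A" using liftQ_closed uQ by blast
  have es0: "e s0 \<in> carrier A" using eA s0Q by blast
  have ex: "e x = inv\<^bsub>A\<^esub> ?L \<otimes>\<^bsub>A\<^esub> e s0 \<otimes>\<^bsub>A\<^esub> ?L"
    using conj_lift[OF uQ s0Q] u xeq by simp
  have "e x \<otimes>\<^bsub>A\<^esub> e x = inv\<^bsub>A\<^esub> ?L \<otimes>\<^bsub>A\<^esub> (z \<otimes>\<^bsub>A\<^esub> ?L)"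
    unfolding ex using Lc es0 by (simp add: A.m_assoc A.cancel_l1)
  also have "\<dots> = inv\<^bsub>A\<^esub> ?L \<otimes>\<^bsub>A\<^esub> (?L \<otimes>\<^bsub>A\<^esub> z)" using z_central[OF Lc] by simp
  also have "\<dots> = z" using Lc zA by (simp add: A.cancel_l2)
  finally show ?thesis .
qed

lemma inv_e: assumes "x \<in> Q" shows "inv\<^bsub>A\<^esub> (e x) = zp (-1) \<otimes>\<^bsub>A\<^esub> e x"
proof -
  have c: "e x \<in> carrier A" using eA assms by blast
  have "(inv\<^bsub>A\<^esub> z \<otimes>\<^bsub>A\<^esub> e x) \<otimes>\<^bsub>A\<^esub> e x = \<one>\<^bsub>A\<^esub>"
    using esq[OF assms] c zA by (simp add: A.m_assoc)
  then have "inv\<^bsub>A\<^esub> (e x) = inv\<^bsub>A\<^esub> z \<otimes>\<^bsub>A\<^esub> e x"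
    using c zA by (intro A.inv_equality) auto
  moreover have "zp (-1) = inv\<^bsub>A\<^esub> z" using A.int_pow_neg[OF zA, of 1] zA by simp
  ultimately show ?thesis by simp
qed

lemma Zmult:
  assumes "set u \<subseteq> Q" "set v \<subseteq> Q"
  shows "(zp a \<otimes>\<^bsub>A\<^esub> lift u) \<otimes>\<^bsub>A\<^esub> (zp b \<otimes>\<^bsub>A\<^esub> lift v) = zp (a + b) \<otimes>\<^bsub>A\<^esub> lift (u @ v)"
proof -
  have c: "lift u \<in> carrier A" "lift v \<in> carrier A" using liftQ_closed assms by auto
  have "(zp a \<otimes>\<^bsub>A\<^esub> lift u) \<otimes>\<^bsub>A\<^esub> (zp b \<otimes>\<^bsub>A\<^esub> lift v) = zp a \<otimes>\<^bsub>A\<^esub> (lift u \<otimes>\<^bsub>A\<^esub> zp b) \<otimes>\<^bsub>A\<^esub> lift v"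
    using c zp_closed by (simp add: A.m_assoc)
  also have "\<dots> = zp a \<otimes>\<^bsub>A\<^esub> (zp b \<otimes>\<^bsub>A\<^esub> lift u) \<otimes>\<^bsub>A\<^esub> lift v"
    using zpow_central[OF c(1)] by simp
  also have "\<dots> = (zp a \<otimes>\<^bsub>A\<^esub> zp b) \<otimes>\<^bsub>A\<^esub> (lift u \<otimes>\<^bsub>A\<^esub> lift v)"
    using c zp_closed by (simp add: A.m_assoc)
  also have "\<dots> = zp (a + b) \<otimes>\<^bsub>A\<^esub> lift (u @ v)"
    using zp_add liftQ_append assms by simp
  finally show ?thesis .
qed

lemma inv_lift: "set u \<subseteq> Q \<Longrightarrow> inv\<^bsub>A\<^esub> (lift u) = zp (- int (length u)) \<otimes>\<^bsub>A\<^esub> lift (rev u)"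
proof (induction u)
  case Nil then show ?case by simp
next
  case (Cons x u)
  have x: "x \<in> Q" and u: "set u \<subseteq> Q" using Cons.prems by auto
  have IH: "inv\<^bsub>A\<^esub> (lift u) = zp (- int (length u)) \<otimes>\<^bsub>A\<^esub> lift (rev u)" using Cons.IH u by blast
  have c: "e x \<in> carrier A" "lift u \<in> carrier A" using eA x liftQ_closed u by auto
  have "inv\<^bsub>A\<^esub> (lift (x # u)) = inv\<^bsub>A\<^esub> (lift u) \<otimes>\<^bsub>A\<^esub> inv\<^bsub>A\<^esub> (e x)"
    using c by (simp add: A.inv_mult_group)
  also have "\<dots> = (zp (- int (length u)) \<otimes>\<^bsub>A\<^esub> lift (rev u)) \<otimes>\<^bsub>A\<^esub> (zp (-1) \<otimes>\<^bsub>A\<^esub> lift [x])"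
    using IH inv_e[OF x] c by simp
  also have "\<dots> = zp (- int (length u) + - 1) \<otimes>\<^bsub>A\<^esub> lift (rev u @ [x])"
    using Zmult[of "rev u" "[x]" "- int (length u)" "-1"] u x by simp
  also have "\<dots> = zp (- int (length (x # u))) \<otimes>\<^bsub>A\<^esub> lift (rev (x # u))"
  proof -
    have "- int (length u) + - 1 = - int (length (x # u))" by simp
    then show ?thesis by (simp only: rev.simps)
  qed
  finally show ?case .
qed

lemma e_form: assumes "x \<in> Q" shows "\<exists>n u. set u \<subseteq> S \<and> e x = zp n \<otimes>\<^bsub>A\<^esub> lift u"
proof -
  obtain w s where ws: "x = inv\<^bsub>W\<^esub> w \<otimes>\<^bsub>W\<^esub> s \<otimes>\<^bsub>W\<^esub> w" "w \<in> carrier W" "s \<in> S"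
    using assms Q_iff by blast
  obtain v where v: "set v \<subseteq> S" "evW v = w" using genW ws by blast
  have vQ: "set v \<subseteq> Q" and sQ: "s \<in> Q" using v ws SQ by auto
  have es: "e s \<in> carrier A" using eA sQ by blast
  have ls: "lift [s] = e s" using es by simp
  have "e x = inv\<^bsub>A\<^esub> (lift v) \<otimes>\<^bsub>A\<^esub> e s \<otimes>\<^bsub>A\<^esub> lift v"
    using conj_lift[OF vQ sQ] v ws by simp
  also have "\<dots> = ((zp (- int (length v)) \<otimes>\<^bsub>A\<^esub> lift (rev v)) \<otimes>\<^bsub>A\<^esub> (zp 0 \<otimes>\<^bsub>A\<^esub> lift [s]))
      \<otimes>\<^bsub>A\<^esub> (zp 0 \<otimes>\<^bsub>A\<^esub> lift v)"
    using inv_lift[OF vQ] ls es liftQ_closed[OF vQ] by simp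
  also have "\<dots> = zp (- int (length v)) \<otimes>\<^bsub>A\<^esub> lift (rev v @ [s] @ v)"
  proof -
    let ?a = "- int (length v)"
    have r1: "set (rev v) \<subseteq> Q" "set [s] \<subseteq> Q" "set (rev v @ [s]) \<subseteq> Q" using vQ sQ by auto
    note z1 = Zmult[of "rev v" "[s]" ?a 0, OF r1(1,2), unfolded add_0_right]
    note z2 = Zmult[of "rev v @ [s]" v ?a 0, OF r1(3) vQ, unfolded add_0_right]
    show ?thesis by (simp only: z1 z2 append_assoc append_Cons append_Nil)
  qed
  finally have "e x = zp (- int (length v)) \<otimes>\<^bsub>A\<^esub> lift (rev v @ [s] @ v)" .
  moreover have "set (rev v @ [s] @ v) \<subseteq> S" using v ws by auto
  ultimately show ?thesis by blast
qed

lemma letter_form: assumes "l \<in> L" shows "\<exists>n u. set u \<subseteq> S \<and> ad_letter A e l = zp n \<otimes>\<^bsub>A\<^esub> lift u"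
proof -
  obtain x b where l: "l = (x, b)" "x \<in> Q" using assms by auto
  obtain n u where nu: "set u \<subseteq> S" "e x = zp n \<otimes>\<^bsub>A\<^esub> lift u" using e_form l by blast
  have uQ: "set u \<subseteq> Q" using nu SQ by auto
  show ?thesis
  proof (cases b)
    case True then show ?thesis using nu l by (auto simp: ad_letter_def)
  next
    case False
    have "inv\<^bsub>A\<^esub> (e x) = (zp (-1) \<otimes>\<^bsub>A\<^esub> lift []) \<otimes>\<^bsub>A\<^esub> (zp n \<otimes>\<^bsub>A\<^esub> lift u)"
      using inv_e[OF l(2)] nu zp_closed by simp
    also have "\<dots> = zp (-1 + n) \<otimes>\<^bsub>A\<^esub> lift u" using Zmult[of "[]" u] uQ by simp
    finally show ?thesis using False l nu by (auto simp: ad_letter_def)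
  qed
qed

lemma P_all: assumes "g \<in> carrier A" shows "\<exists>n u. set u \<subseteq> S \<and> g = zp n \<otimes>\<^bsub>A\<^esub> lift u"
proof -
  obtain ws where ws: "set ws \<subseteq> L" "evA ws = g" using genA assms by blast
  have "\<exists>n u. set u \<subseteq> S \<and> evA ws = zp n \<otimes>\<^bsub>A\<^esub> lift u" using ws(1)
  proof (induction ws)
    case Nil then show ?case by (intro exI[of _ 0] exI[of _ "[]"]) simp
  next
    case (Cons l ws)
    obtain n u where nu: "set u \<subseteq> S" "evA ws = zp n \<otimes>\<^bsub>A\<^esub> lift u" using Cons by auto
    have lL: "l \<in> L" using Cons.prems by auto
    obtain k v where kv: "set v \<subseteq> S" "ad_letter A e l = zp k \<otimes>\<^bsub>A\<^esub> lift v"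
      using letter_form[OF lL] by blast
    have "evA (l # ws) = (zp k \<otimes>\<^bsub>A\<^esub> lift v) \<otimes>\<^bsub>A\<^esub> (zp n \<otimes>\<^bsub>A\<^esub> lift u)" using nu kv by simp
    also have "\<dots> = zp (k + n) \<otimes>\<^bsub>A\<^esub> lift (v @ u)" using Zmult nu kv SQ by auto
    finally show ?case using nu kv by (intro exI[of _ "k + n"] exI[of _ "v @ u"]) auto
  qed
  then show ?thesis using ws by simp
qed

end

declare alt.simps[simp del]

context cxa
begin

lemma odd_alt:
  assumes "x \<in> Q" "y \<in> Q"
  shows "evW (alt x y (2 * j + 1)) \<in> Q \<and> lift (alt x y (2 * j + 1)) = zp (int j) \<otimes>\<^bsub>A\<^esub> e (evW (alt x y (2 * j + 1)))"
  using assms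
proof (induction j arbitrary: x y)
  case 0
  have xc: "x \<in> carrier W" "e x \<in> carrier A" using QW eA 0 by auto
  have a1: "alt x y (2 * 0 + 1) = [x]"
  proof -
    have "2 * 0 + 1 = Suc 0" by simp
    then show ?thesis by (simp only: alt.simps)
  qed
  have "evW [x] = x" using xc by (simp add: word_eval_id_Cons)
  moreover have "lift [x] = e x" using xc by simp
  ultimately show ?case using 0 xc unfolding a1 by simp
next
  case (Suc j)
  let ?Lw = "alt y x (2 * j + 1)"
  let ?c = "evW ?Lw"
  have IH0: "?c \<in> Q \<and> lift ?Lw = zp (int j) \<otimes>\<^bsub>A\<^esub> e ?c" by (rule Suc.IH[OF Suc.prems(2) Suc.prems(1)])
  have IH: "?c \<in> Q" "lift ?Lw = zp (int j) \<otimes>\<^bsub>A\<^esub> e ?c" using IH0 by (rule conjunct1, rule conjunct2)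
  have "set ?Lw \<subseteq> {y, x}" by (rule alt_set)
  then have LwQ: "set ?Lw \<subseteq> Q" using Suc.prems by blast
  have eq: "alt x y (2 * Suc j + 1) = x # (?Lw @ [x])"
  proof -
    have "2 * Suc j + 1 = Suc (Suc (2 * j + 1))" by simp
    then have "alt x y (2 * Suc j + 1) = x # alt y x (Suc (2 * j + 1))" by (simp only: alt.simps)
    also have "alt y x (Suc (2 * j + 1)) = ?Lw @ [x]" by (subst alt_snoc) simp
    finally show ?thesis .
  qed
  have xc: "x \<in> carrier W" "e x \<in> carrier A" "?c \<in> carrier W" "e ?c \<in> carrier A"
    using QW eA Suc.prems IH by auto
  have xcx: "x \<otimes>\<^bsub>W\<^esub> ?c \<otimes>\<^bsub>W\<^esub> x \<in> Q" using Qop IH Suc.prems by blast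
  have ev: "evW (x # (?Lw @ [x])) = x \<otimes>\<^bsub>W\<^esub> ?c \<otimes>\<^bsub>W\<^esub> x"
  proof -
    have "evW (?Lw @ [x]) = ?c \<otimes>\<^bsub>W\<^esub> evW [x]" by (rule evQ_append[OF LwQ]) (use Suc.prems in simp)
    also have "evW [x] = x" using xc by (simp add: word_eval_id_Cons)
    finally have "evW (?Lw @ [x]) = ?c \<otimes>\<^bsub>W\<^esub> x" .
    then show ?thesis using xc by (simp add: word_eval_id_Cons W.m_assoc)
  qed
  have rel: "e ?c \<otimes>\<^bsub>A\<^esub> e x = e x \<otimes>\<^bsub>A\<^esub> e (x \<otimes>\<^bsub>W\<^esub> ?c \<otimes>\<^bsub>W\<^esub> x)"
  proof -
    have "inv\<^bsub>A\<^esub> (e x) \<otimes>\<^bsub>A\<^esub> e ?c \<otimes>\<^bsub>A\<^esub> e x = e (x \<otimes>\<^bsub>W\<^esub> ?c \<otimes>\<^bsub>W\<^esub> x)"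
      using conj_rel IH Suc.prems by blast
    then have "e x \<otimes>\<^bsub>A\<^esub> (inv\<^bsub>A\<^esub> (e x) \<otimes>\<^bsub>A\<^esub> e ?c \<otimes>\<^bsub>A\<^esub> e x) = e x \<otimes>\<^bsub>A\<^esub> e (x \<otimes>\<^bsub>W\<^esub> ?c \<otimes>\<^bsub>W\<^esub> x)"
      by simp
    then show ?thesis using xc by (simp add: A.m_assoc A.cancel_l1)
  qed
  have exx: "e (x \<otimes>\<^bsub>W\<^esub> ?c \<otimes>\<^bsub>W\<^esub> x) \<in> carrier A" using eA xcx by blast
  have "lift (x # (?Lw @ [x])) = e x \<otimes>\<^bsub>A\<^esub> (zp (int j) \<otimes>\<^bsub>A\<^esub> e ?c \<otimes>\<^bsub>A\<^esub> e x)"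
    using liftQ_append LwQ Suc.prems IH xc zp_closed by (simp add: A.m_assoc)
  also have "\<dots> = e x \<otimes>\<^bsub>A\<^esub> (zp (int j) \<otimes>\<^bsub>A\<^esub> (e ?c \<otimes>\<^bsub>A\<^esub> e x))"
    using xc zp_closed by (simp add: A.m_assoc)
  also have "\<dots> = e x \<otimes>\<^bsub>A\<^esub> (zp (int j) \<otimes>\<^bsub>A\<^esub> (e x \<otimes>\<^bsub>A\<^esub> e (x \<otimes>\<^bsub>W\<^esub> ?c \<otimes>\<^bsub>W\<^esub> x)))"
    using rel by simp
  also have "\<dots> = (e x \<otimes>\<^bsub>A\<^esub> zp (int j)) \<otimes>\<^bsub>A\<^esub> e x \<otimes>\<^bsub>A\<^esub> e (x \<otimes>\<^bsub>W\<^esub> ?c \<otimes>\<^bsub>W\<^esub> x)"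
    using xc zp_closed exx by (simp add: A.m_assoc)
  also have "\<dots> = (zp (int j) \<otimes>\<^bsub>A\<^esub> e x) \<otimes>\<^bsub>A\<^esub> e x \<otimes>\<^bsub>A\<^esub> e (x \<otimes>\<^bsub>W\<^esub> ?c \<otimes>\<^bsub>W\<^esub> x)"
    using zpow_central[OF xc(2)] by simp
  also have "\<dots> = zp (int j) \<otimes>\<^bsub>A\<^esub> (e x \<otimes>\<^bsub>A\<^esub> e x) \<otimes>\<^bsub>A\<^esub> e (x \<otimes>\<^bsub>W\<^esub> ?c \<otimes>\<^bsub>W\<^esub> x)"
    using xc zp_closed exx by (simp add: A.m_assoc)
  also have "\<dots> = zp (int j + 1) \<otimes>\<^bsub>A\<^esub> e (x \<otimes>\<^bsub>W\<^esub> ?c \<otimes>\<^bsub>W\<^esub> x)"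
    using esq Suc.prems zp_add[of "int j" 1] zp_1 by simp
  finally have L: "lift (x # (?Lw @ [x])) = zp (int j + 1) \<otimes>\<^bsub>A\<^esub> e (x \<otimes>\<^bsub>W\<^esub> ?c \<otimes>\<^bsub>W\<^esub> x)" .
  have isj: "int (Suc j) = int j + 1" by simp
  show ?case unfolding eq ev isj using L xcx by blast
qed

lemma relator_lift: assumes "r \<in> R" shows "\<exists>n. lift r = zp n"
proof -
  obtain s t k where r: "r = concat (replicate k [s, t])" "s \<in> S" "t \<in> S"
    using assms unfolding coxeter_relators_def by blast
  have evr: "evW r = \<one>\<^bsub>W\<^esub>" using relatorsW assms by blast
  show ?thesis
  proof (cases k)
    case 0 then show ?thesis using r by (intro exI[of _ 0]) simp
  next
    case (Suc k')
    have sQ: "s \<in> Q" "t \<in> Q" using r SQ by auto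
    let ?Lw = "alt s t (2 * k' + 1)"
    let ?c = "evW ?Lw"
    have "set ?Lw \<subseteq> {s, t}" by (rule alt_set)
    then have LwQ: "set ?Lw \<subseteq> Q" using sQ by blast
    have oa: "?c \<in> Q" "lift ?Lw = zp (int k') \<otimes>\<^bsub>A\<^esub> e ?c" using odd_alt sQ by auto
    have req: "r = ?Lw @ [t]"
    proof -
      have r2: "r = alt s t (2 * k)" using r(1) rep_alt by metis
      have "2 * k = Suc (2 * k' + 1)" using Suc by simp
      then have "r = alt s t (Suc (2 * k' + 1))" using r2 by simp
      also have "\<dots> = ?Lw @ [t]" by (subst alt_snoc) simp
      finally show ?thesis .
    qed
    have tc: "t \<in> carrier W" "?c \<in> carrier W" using QW sQ oa by auto
    have "?c \<otimes>\<^bsub>W\<^esub> t = \<one>\<^bsub>W\<^esub>"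
    proof -
      have "evW r = ?c \<otimes>\<^bsub>W\<^esub> evW [t]" unfolding req by (rule evQ_append[OF LwQ]) (use sQ in simp)
      moreover have "evW [t] = t" using tc by (simp add: word_eval_id_Cons)
      ultimately show ?thesis using evr by simp
    qed
    then have "inv\<^bsub>W\<^esub> t = ?c" using tc by (intro W.inv_equality) auto
    then have ct: "?c = t" using Qinv sQ by simp
    have et: "e t \<in> carrier A" using eA sQ by blast
    have "lift r = lift ?Lw \<otimes>\<^bsub>A\<^esub> lift [t]" unfolding req by (rule liftQ_append[OF LwQ]) (use sQ in simp)
    also have "\<dots> = zp (int k') \<otimes>\<^bsub>A\<^esub> e t \<otimes>\<^bsub>A\<^esub> e t" using oa ct et by simp
    also have "\<dots> = zp (int k') \<otimes>\<^bsub>A\<^esub> z" using esq sQ et zp_closed by (simp add: A.m_assoc)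
    also have "\<dots> = zp (int k' + 1)" using zp_add[of "int k'" 1] zp_1 by simp
    finally show ?thesis by blast
  qed
qed

lemma zp_shift: assumes "Y \<in> carrier A" shows "(\<exists>n. zp k \<otimes>\<^bsub>A\<^esub> Y = zp n) \<longleftrightarrow> (\<exists>n. Y = zp n)"
proof
  assume "\<exists>n. zp k \<otimes>\<^bsub>A\<^esub> Y = zp n"
  then obtain n where n: "zp k \<otimes>\<^bsub>A\<^esub> Y = zp n" by blast
  have "Y = inv\<^bsub>A\<^esub> (zp k) \<otimes>\<^bsub>A\<^esub> zp n" using n assms zp_closed by (metis A.inv_solve_left)
  also have "\<dots> = zp (- k) \<otimes>\<^bsub>A\<^esub> zp n" using A.int_pow_neg zA by simp
  also have "\<dots> = zp (- k + n)" by (rule zp_add[symmetric])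
  finally show "\<exists>n. Y = zp n" by blast
next
  assume "\<exists>n. Y = zp n"
  then obtain n where "Y = zp n" by blast
  then have "zp k \<otimes>\<^bsub>A\<^esub> Y = zp (k + n)" using zp_add by simp
  then show "\<exists>n. zp k \<otimes>\<^bsub>A\<^esub> Y = zp n" by blast
qed

lemma lift_rel: assumes "word_rel R u []" shows "set u \<subseteq> S \<and> (\<exists>n. lift u = zp n) \<longleftrightarrow> True"
proof -
  let ?f = "\<lambda>w. set w \<subseteq> S \<and> (\<exists>n. lift w = zp n)"
  have "?f u = ?f []"
  proof (rule equivclp_invariant[where f = ?f])
    show "equivclp (\<lambda>x y. \<exists>u v r. r \<in> R \<and> x = u @ r @ v \<and> y = u @ v) u []"
      using assms unfolding word_rel_def .
  next
    fix x y assume "\<exists>a b r. r \<in> R \<and> x = a @ r @ b \<and> y = a @ b"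
    then obtain a b r where abr: "r \<in> R" "x = a @ r @ b" "y = a @ b" by blast
    have rS: "set r \<subseteq> S" using relatorsW abr by blast
    obtain k where k: "lift r = zp k" using relator_lift abr by blast
    show "?f x = ?f y"
    proof (cases "set x \<subseteq> S")
      case True
      then have ab: "set a \<subseteq> Q" "set b \<subseteq> Q" "set r \<subseteq> Q" using abr SQ by auto
      have c: "lift a \<in> carrier A" "lift b \<in> carrier A" using liftQ_closed ab by auto
      have "lift x = lift a \<otimes>\<^bsub>A\<^esub> (zp k \<otimes>\<^bsub>A\<^esub> lift b)"
        using abr ab liftQ_append k by simp
      also have "\<dots> = (lift a \<otimes>\<^bsub>A\<^esub> zp k) \<otimes>\<^bsub>A\<^esub> lift b" using c zp_closed by (simp add: A.m_assoc)
      also have "\<dots> = (zp k \<otimes>\<^bsub>A\<^esub> lift a) \<otimes>\<^bsub>A\<^esub> lift b"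
        using zpow_central[OF c(1), of k] by simp
      also have "\<dots> = zp k \<otimes>\<^bsub>A\<^esub> (lift a \<otimes>\<^bsub>A\<^esub> lift b)"
        using c zp_closed by (simp add: A.m_assoc)
      also have "\<dots> = zp k \<otimes>\<^bsub>A\<^esub> lift y"
        using abr liftQ_append ab by simp
      finally have "lift x = zp k \<otimes>\<^bsub>A\<^esub> lift y" .
      moreover have "lift y \<in> carrier A" using abr ab liftQ_closed by simp
      moreover have "set y \<subseteq> S" using True abr by auto
      ultimately show ?thesis using zp_shift True by simp
    next
      case False
      then have "\<not> set y \<subseteq> S" using abr rS by auto
      then show ?thesis using False by simp
    qed
  qed
  then show ?thesis by (intro iffI) (auto intro: exI[of _ 0])
qed

lemma ker_z: assumes "g \<in> carrier A" "\<phi> g = \<one>\<^bsub>W\<^esub>" shows "\<exists>n. g = zp n"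
proof -
  obtain n u where nu: "set u \<subseteq> S" "g = zp n \<otimes>\<^bsub>A\<^esub> lift u" using P_all assms by blast
  have uQ: "set u \<subseteq> Q" using nu SQ by auto
  have "\<phi> (zp n) = \<one>\<^bsub>W\<^esub>" using H.hom_int_pow[OF zA] phi_z by simp
  then have "\<phi> g = evW u" using nu phi_lift[OF uQ] liftQ_closed[OF uQ] zp_closed evQ_closed[OF uQ] by simp
  then have "evW u = \<one>\<^bsub>W\<^esub>" using assms by simp
  then have "word_rel R u []" using relW nu by blast
  then obtain j where "lift u = zp j" using lift_rel by blast
  then have "g = zp (n + j)" using nu zp_add by simp
  then show ?thesis by blast
qed

end

definition expsum :: "('a \<times> bool) list \<Rightarrow> int" where
  "expsum ws = sum_list (map (\<lambda>l. if snd l then 1 else -1) ws)"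

definition flipw :: "('a \<times> bool) list \<Rightarrow> ('a \<times> bool) list" where
  "flipw ws = rev (map (\<lambda>l. (fst l, \<not> snd l)) ws)"

lemma expsum_Nil[simp]: "expsum [] = 0" by (simp add: expsum_def)
lemma expsum_Cons[simp]: "expsum (l # ws) = (if snd l then 1 else -1) + expsum ws" by (simp add: expsum_def)
lemma expsum_append[simp]: "expsum (u @ v) = expsum u + expsum v" by (simp add: expsum_def)
lemma expsum_flip: "expsum (flipw ws) = - expsum ws"
  by (induction ws) (auto simp: flipw_def expsum_def)
lemma flipw_Cons: "flipw (l # ws) = flipw ws @ [(fst l, \<not> snd l)]" by (simp add: flipw_def)
lemma set_flipw: "set (flipw ws) = (\<lambda>l. (fst l, \<not> snd l)) ` set ws" by (simp add: flipw_def)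

context cxa
begin

lemma evA_closed: "set ws \<subseteq> L \<Longrightarrow> evA ws \<in> carrier A"
  using letters_closed by (intro word_eval_closed) auto

lemma evA_append: "set u \<subseteq> L \<Longrightarrow> set v \<subseteq> L \<Longrightarrow> evA (u @ v) = evA u \<otimes>\<^bsub>A\<^esub> evA v"
  by (intro word_eval_append) (use letters_closed A.is_monoid in blast)+

lemma flipL: "set ws \<subseteq> L \<Longrightarrow> set (flipw ws) \<subseteq> L"
  by (auto simp: set_flipw)

lemma evA_flip: "set ws \<subseteq> L \<Longrightarrow> evA (flipw ws) = inv\<^bsub>A\<^esub> (evA ws)"
proof (induction ws)
  case Nil then show ?case by (simp add: flipw_def)
next
  case (Cons l ws)
  have ws: "set ws \<subseteq> L" and l: "l \<in> L" using Cons.prems by auto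
  have lc: "ad_letter A e l \<in> carrier A" using letter_closed l by blast
  have fl: "ad_letter A e (fst l, \<not> snd l) = inv\<^bsub>A\<^esub> (ad_letter A e l)"
  proof -
    have "e (fst l) \<in> carrier A" using eA l by auto
    then show ?thesis by (cases "snd l") (auto simp: ad_letter_def)
  qed
  have flL: "set [(fst l, \<not> snd l)] \<subseteq> L" using l by auto
  have "evA (flipw (l # ws)) = evA (flipw ws) \<otimes>\<^bsub>A\<^esub> evA [(fst l, \<not> snd l)]"
    unfolding flipw_Cons by (rule evA_append[OF flipL[OF ws] flL])
  also have "\<dots> = inv\<^bsub>A\<^esub> (evA ws) \<otimes>\<^bsub>A\<^esub> inv\<^bsub>A\<^esub> (ad_letter A e l)"
    using Cons.IH[OF ws] fl lc by simp
  also have "\<dots> = inv\<^bsub>A\<^esub> (evA (l # ws))"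
    using lc evA_closed[OF ws] by (simp add: A.inv_mult_group)
  finally show ?case .
qed

lemma relator_expsum: "r \<in> ad_relators W Q \<Longrightarrow> expsum r = 0"
  unfolding ad_relators_def by auto

lemma word_rel_expsum: assumes "word_rel (ad_relators W Q) u v" shows "expsum u = expsum v"
proof -
  show ?thesis using assms unfolding word_rel_def
  proof (rule equivclp_invariant[rotated])
    fix x y assume "\<exists>a b r. r \<in> ad_relators W Q \<and> x = a @ r @ b \<and> y = a @ b"
    then show "expsum x = expsum y" using relator_expsum by auto
  qed
qed

lemma deg_wd: assumes "set w1 \<subseteq> L" "set w2 \<subseteq> L" "evA w1 = evA w2" shows "expsum w1 = expsum w2"
proof -
  have "evA (w1 @ flipw w2) = evA w1 \<otimes>\<^bsub>A\<^esub> inv\<^bsub>A\<^esub> (evA w2)"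
    using evA_append[OF assms(1) flipL[OF assms(2)]] evA_flip[OF assms(2)] by simp
  also have "\<dots> = \<one>\<^bsub>A\<^esub>" using assms evA_closed by simp
  finally have "word_rel (ad_relators W Q) (w1 @ flipw w2) []"
    using relA assms flipL by auto
  then have "expsum (w1 @ flipw w2) = 0" using word_rel_expsum by fastforce
  then show ?thesis using expsum_flip[of w2] by simp
qed

definition degA :: "'b \<Rightarrow> int" where
  "degA g = expsum (SOME ws. set ws \<subseteq> L \<and> evA ws = g)"

lemma deg_eq: assumes "set ws \<subseteq> L" shows "degA (evA ws) = expsum ws"
proof -
  have "\<exists>w. set w \<subseteq> L \<and> evA w = evA ws" using assms by blast
  then have "set (SOME w. set w \<subseteq> L \<and> evA w = evA ws) \<subseteq> L \<and> evA (SOME w. set w \<subseteq> L \<and> evA w = evA ws) = evA ws"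
    by (rule someI_ex)
  then show ?thesis unfolding degA_def using deg_wd assms by blast
qed

lemma deg_mult: assumes "g \<in> carrier A" "h \<in> carrier A" shows "degA (g \<otimes>\<^bsub>A\<^esub> h) = degA g + degA h"
proof -
  obtain u v where uv: "set u \<subseteq> L" "evA u = g" "set v \<subseteq> L" "evA v = h" using genA assms by metis
  have "g \<otimes>\<^bsub>A\<^esub> h = evA (u @ v)" using evA_append uv by simp
  moreover have "set (u @ v) \<subseteq> L" using uv by simp
  ultimately have "degA (g \<otimes>\<^bsub>A\<^esub> h) = expsum u + expsum v" using deg_eq by simp
  moreover have "degA g = expsum u" "degA h = expsum v" using deg_eq uv by blast+
  ultimately show ?thesis by simp
qed

lemma deg_lift: assumes "set u \<subseteq> Q" shows "degA (lift u) = int (length u)"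
proof -
  have "lift u = evA (map (\<lambda>x. (x, True)) u)" by (induction u) (simp_all add: ad_letter_def)
  moreover have "set (map (\<lambda>x. (x, True)) u) \<subseteq> L" using assms by auto
  moreover have "expsum (map (\<lambda>x. (x, True)) u) = int (length u)" by (induction u) auto
  ultimately show ?thesis using deg_eq by simp
qed

lemma deg_z: "degA z = 2"
proof -
  have "set [s0, s0] \<subseteq> Q" using SQ s0S by auto
  from deg_lift[OF this] show ?thesis unfolding lift_s0s0 by simp
qed

lemma deg_one: "degA \<one>\<^bsub>A\<^esub> = 0" using deg_eq[of "[]"] by simp

lemma deg_inv: assumes "g \<in> carrier A" shows "degA (inv\<^bsub>A\<^esub> g) = - degA g"
proof -
  have "degA (g \<otimes>\<^bsub>A\<^esub> inv\<^bsub>A\<^esub> g) = degA g + degA (inv\<^bsub>A\<^esub> g)" by (rule deg_mult[OF assms A.inv_closed[OF assms]])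
  then show ?thesis using assms deg_one by simp
qed

lemma deg_znat: "degA (z [^]\<^bsub>A\<^esub> (k::nat)) = 2 * int k"
proof (induction k)
  case 0 then show ?case using deg_one by simp
next
  case (Suc k)
  have "degA (z [^]\<^bsub>A\<^esub> Suc k) = degA (z [^]\<^bsub>A\<^esub> k \<otimes>\<^bsub>A\<^esub> z)" by simp
  also have "\<dots> = 2 * int k + 2" using deg_mult zA Suc deg_z by simp
  finally show ?case by simp
qed

lemma deg_zp: "degA (zp n) = 2 * n"
proof (cases "n < 0")
  case True
  then have "zp n = inv\<^bsub>A\<^esub> (z [^]\<^bsub>A\<^esub> (nat (-n)))" by (subst int_pow_def2) simp
  then have e1: "degA (zp n) = - degA (z [^]\<^bsub>A\<^esub> (nat (-n)))"
    by (simp only:) (rule deg_inv[OF A.nat_pow_closed[OF zA]])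
  have e2: "degA (z [^]\<^bsub>A\<^esub> (nat (-n))) = 2 * int (nat (-n))" by (rule deg_znat)
  have e3: "int (nat (-n)) = - n" using True by simp
  show ?thesis using e1 e2 e3 by linarith
next
  case False
  then have "zp n = z [^]\<^bsub>A\<^esub> (nat n)" by (subst int_pow_def2) simp
  then have e1: "degA (zp n) = degA (z [^]\<^bsub>A\<^esub> (nat n))" by (simp only:)
  have e2: "degA (z [^]\<^bsub>A\<^esub> (nat n)) = 2 * int (nat n)" by (rule deg_znat)
  have e3: "int (nat n) = n" using False by simp
  show ?thesis using e1 e2 e3 by linarith
qed

lemma deg_parity: assumes "g \<in> carrier A" shows "even (degA g) = even (coxeter_length W S (\<phi> g))"
proof -
  obtain n u where nu: "set u \<subseteq> S" "g = zp n \<otimes>\<^bsub>A\<^esub> lift u" using P_all assms by blast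
  have uQ: "set u \<subseteq> Q" using nu SQ by auto
  have "\<phi> (zp n) = \<one>\<^bsub>W\<^esub>" using H.hom_int_pow[OF zA] phi_z by simp
  then have "\<phi> g = evW u" using nu phi_lift[OF uQ] liftQ_closed[OF uQ] zp_closed evQ_closed[OF uQ] by simp
  moreover have "degA g = 2 * n + int (length u)" using nu deg_mult zp_closed liftQ_closed[OF uQ] deg_zp deg_lift[OF uQ] by simp
  ultimately show ?thesis using length_parity[OF nu(1)] by simp
qed

lemma tau_cocycle: "normalized_2cocycle W (tau_rho W S)"
  unfolding normalized_2cocycle_def
proof (intro conjI ballI)
  fix a b c assume abc: "a \<in> carrier W" "b \<in> carrier W" "c \<in> carrier W"
  have h1: "even (coxeter_length W S (a \<otimes>\<^bsub>W\<^esub> b)) = (even (coxeter_length W S a) = even (coxeter_length W S b))"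
    using length_mult abc by blast
  have h2: "even (coxeter_length W S (b \<otimes>\<^bsub>W\<^esub> c)) = (even (coxeter_length W S b) = even (coxeter_length W S c))"
    using length_mult abc by blast
  show "tau_rho W S b c - tau_rho W S (a \<otimes>\<^bsub>W\<^esub> b) c + tau_rho W S a (b \<otimes>\<^bsub>W\<^esub> c) - tau_rho W S a b = 0"
    unfolding tau_rho_def using h1 h2 by auto
next
  fix a assume "a \<in> carrier W"
  show "tau_rho W S \<one>\<^bsub>W\<^esub> a = 0" "tau_rho W S a \<one>\<^bsub>W\<^esub> = 0"
    unfolding tau_rho_def using length_one by auto
qed

lemma ext_cocycle:
  assumes sig: "\<forall>w\<in>carrier W. \<sigma> w \<in> carrier A \<and> \<phi> (\<sigma> w) = w"
    and ab: "a \<in> carrier W" "b \<in> carrier W"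
  shows "2 * extension_cocycle W A z \<sigma> a b = degA (\<sigma> a) + degA (\<sigma> b) - degA (\<sigma> (a \<otimes>\<^bsub>W\<^esub> b))"
proof -
  have abW: "a \<otimes>\<^bsub>W\<^esub> b \<in> carrier W" using ab by simp
  have sc: "\<sigma> a \<in> carrier A" "\<sigma> b \<in> carrier A" "\<sigma> (a \<otimes>\<^bsub>W\<^esub> b) \<in> carrier A"
    using sig ab abW by auto
  let ?K = "\<sigma> a \<otimes>\<^bsub>A\<^esub> \<sigma> b \<otimes>\<^bsub>A\<^esub> inv\<^bsub>A\<^esub> (\<sigma> (a \<otimes>\<^bsub>W\<^esub> b))"
  have Kc: "?K \<in> carrier A" using sc by simp
  have "\<phi> ?K = a \<otimes>\<^bsub>W\<^esub> b \<otimes>\<^bsub>W\<^esub> inv\<^bsub>W\<^esub> (a \<otimes>\<^bsub>W\<^esub> b)"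
    using sc sig ab abW by simp
  also have "\<dots> = \<one>\<^bsub>W\<^esub>" using abW by simp
  finally obtain n where n: "?K = zp n" using ker_z Kc by blast
  have eqn: "\<sigma> a \<otimes>\<^bsub>A\<^esub> \<sigma> b = zp n \<otimes>\<^bsub>A\<^esub> \<sigma> (a \<otimes>\<^bsub>W\<^esub> b)"
    using n sc zp_closed A.inv_solve_right'[of "zp n" "\<sigma> a \<otimes>\<^bsub>A\<^esub> \<sigma> b" "\<sigma> (a \<otimes>\<^bsub>W\<^esub> b)"] by simp
  have uniq: "n' = n" if "\<sigma> a \<otimes>\<^bsub>A\<^esub> \<sigma> b = zp n' \<otimes>\<^bsub>A\<^esub> \<sigma> (a \<otimes>\<^bsub>W\<^esub> b)" for n'
  proof -
    have "zp n' \<otimes>\<^bsub>A\<^esub> \<sigma> (a \<otimes>\<^bsub>W\<^esub> b) = zp n \<otimes>\<^bsub>A\<^esub> \<sigma> (a \<otimes>\<^bsub>W\<^esub> b)" using that eqn by simp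
    then have "zp n' = zp n" using sc zp_closed A.r_cancel by blast
    then have "degA (zp n') = degA (zp n)" by simp
    then show ?thesis using deg_zp by simp
  qed
  have "extension_cocycle W A z \<sigma> a b = n"
    unfolding extension_cocycle_def using eqn uniq by (rule the_equality)
  moreover have "degA (\<sigma> a) + degA (\<sigma> b) = 2 * n + degA (\<sigma> (a \<otimes>\<^bsub>W\<^esub> b))"
    using arg_cong[OF eqn, of degA] deg_mult sc zp_closed deg_zp by simp
  ultimately show ?thesis by simp
qed

lemma cohom:
  assumes sig: "\<forall>w\<in>carrier W. \<sigma> w \<in> carrier A \<and> \<phi> (\<sigma> w) = w"
  shows "cohomologous W (tau_rho W S) (extension_cocycle W A z \<sigma>)"
proof -
  define p where "p w = (if odd (coxeter_length W S w) then 1 else (0::int))" for w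
  define d where "d w = degA (\<sigma> w)" for w
  define c where "c w = (p w - d w) div 2" for w
  have c2: "2 * c w = p w - d w" if "w \<in> carrier W" for w
  proof -
    have "even (d w) = even (coxeter_length W S w)"
      unfolding d_def using deg_parity sig that by force
    then have "even (p w - d w)" unfolding p_def by auto
    then show ?thesis unfolding c_def by simp
  qed
  show ?thesis unfolding cohomologous_def
  proof (intro exI[of _ c] ballI)
    fix a b assume ab: "a \<in> carrier W" "b \<in> carrier W"
    have abW: "a \<otimes>\<^bsub>W\<^esub> b \<in> carrier W" using ab by simp
    have h1: "even (coxeter_length W S (a \<otimes>\<^bsub>W\<^esub> b)) = (even (coxeter_length W S a) = even (coxeter_length W S b))"
      using length_mult ab by blast
    have t: "2 * tau_rho W S a b = p a + p b - p (a \<otimes>\<^bsub>W\<^esub> b)"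
      unfolding tau_rho_def p_def using h1 by auto
    have x: "2 * extension_cocycle W A z \<sigma> a b = d a + d b - d (a \<otimes>\<^bsub>W\<^esub> b)"
      unfolding d_def using ext_cocycle[OF sig ab] .
    show "tau_rho W S a b - extension_cocycle W A z \<sigma> a b = c a + c b - c (a \<otimes>\<^bsub>W\<^esub> b)"
      using t x c2[OF ab(1)] c2[OF ab(2)] c2[OF abW] by linarith
  qed
qed

end

theorem theorem4p8:
  fixes W :: "('a, 'm) monoid_scheme" and S :: "'a set" and m :: "'a \<Rightarrow> 'a \<Rightarrow> enat"
    and A :: "('b, 'n) monoid_scheme" and e :: "'a \<Rightarrow> 'b" and \<phi> :: "'b \<Rightarrow> 'a" and s0 :: 'a
  assumes "coxeter_system W S m"
    and "finite S"
    and "coxeter_c W S = 1"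
    and "adjoint_group W S A e"
    and "\<phi> \<in> hom A W"
    and "\<forall>x\<in>coxeter_quandle W S. \<phi> (e x) = x"
    and "s0 \<in> S"
  shows "normalized_2cocycle W (tau_rho W S)
    \<and> (\<forall>\<sigma>. (\<forall>w\<in>carrier W. \<sigma> w \<in> carrier A \<and> \<phi> (\<sigma> w) = w)
          \<longrightarrow> cohomologous W (tau_rho W S) (extension_cocycle W A (e s0 \<otimes>\<^bsub>A\<^esub> e s0) \<sigma>))"
proof -
  interpret cxa W S m A e \<phi> s0
    using assms by (simp add: cxa_def)
  show ?thesis using tau_cocycle cohom by blast
qed

end
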